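(* Let $P_n,P^*\in\Delta(\Delta(V))$ with $P_n\to P^*$ weakly. For $p\in\mathbb{R}$ and $P\in\Delta(\Delta(V))$ define $\pi(p,P)=\int_{\{\nu:\ \mathbb{E}_\nu[v]\ge p\}}(p-\mathbb{E}_\nu[c(v)])\,dP(\nu)$. Then for all $p\in\mathbb{R}$ and $\delta>0$, $$\limsup_{n\to\infty}\pi(p+\delta,P_n)-\delta\ \le\ \pi(p,P^* )\ \le\ \liminf_{n\to\infty}\pi(p-\delta,P_n)+\delta.$$
   Context: $V\subset\mathbb{R}$ is compact and $c:V\to\mathbb{R}$ is continuous with $v-c(v)\ge0$ for all $v\in V$. $\Delta(V)$ is the set of Borel probability measures on $V$ with the weak topology, and $\Delta(\Delta(V))$ the Borel probability measures on $\Delta(V)$, with weak convergence. *)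

theory Defs
  imports "HOL-Probability.Probability"
begin

definition Delta :: "real set \<Rightarrow> real measure set" where
  "Delta V = {\<nu>. prob_space \<nu> \<and> sets \<nu> = sets (restrict_space borel V)}"

definition weak_top_Delta :: "real set \<Rightarrow> real measure topology" where
  "weak_top_Delta V = topology_generated_by
     {{\<nu> \<in> Delta V. (\<integral>x. f x \<partial>\<nu>) \<in> U} | (f :: real \<Rightarrow> real) U. continuous_on V f \<and> open U}"

definition borel_of_top :: "'a topology \<Rightarrow> 'a measure" where
  "borel_of_top X = sigma (topspace X) {U. openin X U}"

definition DeltaDelta :: "real set \<Rightarrow> real measure measure set" where
  "DeltaDelta V = {P. prob_space P \<and> sets P = sets (borel_of_top (weak_top_Delta V))}"

definition weak_conv_DD :: "real set \<Rightarrow> (nat \<Rightarrow> real measure measure) \<Rightarrow> real measure measure \<Rightarrow> bool" where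
  "weak_conv_DD V P Q \<longleftrightarrow>
     (\<forall>f. continuous_map (weak_top_Delta V) euclideanreal f \<and>
          (\<exists>B. \<forall>\<nu>\<in>topspace (weak_top_Delta V). \<bar>f \<nu>\<bar> \<le> B) \<longrightarrow>
          (\<lambda>n. \<integral>\<nu>. f \<nu> \<partial>(P n)) \<longlonglongrightarrow> (\<integral>\<nu>. f \<nu> \<partial>Q))"

definition profit :: "(real \<Rightarrow> real) \<Rightarrow> real \<Rightarrow> real measure measure \<Rightarrow> real" where
  "profit c p P = (\<integral>\<nu>\<in>{\<nu> \<in> space P. (\<integral>v. v \<partial>\<nu>) \<ge> p}. (p - (\<integral>v. c v \<partial>\<nu>)) \<partial>P)"

end

theory Submission
  imports Defs
begin

lemma topspace_weak: "topspace (weak_top_Delta V) = Delta V"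
proof -
  have "Delta V \<in> {{\<nu> \<in> Delta V. (\<integral>x. f x \<partial>\<nu>) \<in> U} | (f :: real \<Rightarrow> real) U. continuous_on V f \<and> open U}"
    by (rule CollectI, rule exI[of _ "\<lambda>_. 0"], rule exI[of _ UNIV]) auto
  then show ?thesis unfolding weak_top_Delta_def topology_generated_by_topspace by blast
qed

lemma cont_int:
  assumes "continuous_on V f"
  shows "continuous_map (weak_top_Delta V) euclideanreal (\<lambda>\<nu>. \<integral>x. f x \<partial>\<nu>)"
  unfolding continuous_map_def topspace_weak
proof (intro conjI allI impI)
  fix U :: "real set" assume "openin euclideanreal U"
  then have "open U" by simp
  then have "{\<nu> \<in> Delta V. (\<integral>x. f x \<partial>\<nu>) \<in> U} \<in> {{\<nu> \<in> Delta V. (\<integral>x. f x \<partial>\<nu>) \<in> U} | (f :: real \<Rightarrow> real) U. continuous_on V f \<and> open U}"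
    using assms by blast
  then show "openin (weak_top_Delta V) {\<nu> \<in> Delta V. (\<integral>x. f x \<partial>\<nu>) \<in> U}"
    unfolding weak_top_Delta_def by (rule topology_generated_by_Basis)
qed auto

lemma space_borel_of_top: "space (borel_of_top X) = topspace X"
  unfolding borel_of_top_def by (rule space_measure_of) (auto dest: openin_subset)

lemma sets_borel_of_top: "openin X U \<Longrightarrow> U \<in> sets (borel_of_top X)"
  unfolding borel_of_top_def by (rule in_measure_of) (auto dest: openin_subset)

lemma meas_borel_of_top:
  assumes "continuous_map X euclideanreal f"
  shows "f \<in> borel_measurable (borel_of_top X)"
proof (rule borel_measurableI)
  fix S :: "real set" assume "open S"
  then have "openin X {x \<in> topspace X. f x \<in> S}"
    using assms by (simp add: continuous_map_def)
  moreover have "f -` S \<inter> space (borel_of_top X) = {x \<in> topspace X. f x \<in> S}"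
    by (auto simp: space_borel_of_top)
  ultimately show "f -` S \<inter> space (borel_of_top X) \<in> sets (borel_of_top X)"
    using sets_borel_of_top by metis
qed

lemma DD_sets: "P \<in> DeltaDelta V \<Longrightarrow> sets P = sets (borel_of_top (weak_top_Delta V))"
  by (simp add: DeltaDelta_def)

lemma DD_space: "P \<in> DeltaDelta V \<Longrightarrow> space P = Delta V"
proof -
  assume "P \<in> DeltaDelta V"
  then have "space P = space (borel_of_top (weak_top_Delta V))"
    by (intro sets_eq_imp_space_eq DD_sets)
  then show ?thesis by (simp only: space_borel_of_top topspace_weak)
qed

lemma DD_meas:
  assumes "P \<in> DeltaDelta V" "continuous_map (weak_top_Delta V) euclideanreal f"
  shows "f \<in> borel_measurable P"
proof -
  have "measurable P (borel :: real measure) = measurable (borel_of_top (weak_top_Delta V)) borel"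
    by (rule measurable_cong_sets[OF DD_sets[OF assms(1)] refl])
  then show ?thesis using meas_borel_of_top[OF assms(2)] by simp
qed

lemma D_sets: "\<nu> \<in> Delta V \<Longrightarrow> sets \<nu> = sets (restrict_space borel V)"
  by (simp add: Delta_def)

lemma D_space: "\<nu> \<in> Delta V \<Longrightarrow> space \<nu> = V"
proof -
  assume "\<nu> \<in> Delta V"
  then have "space \<nu> = space (restrict_space borel V)"
    by (intro sets_eq_imp_space_eq D_sets)
  then show ?thesis by (simp add: space_restrict_space)
qed

lemma D_int:
  fixes f :: "real \<Rightarrow> real"
  assumes "compact V" "continuous_on V f" "\<nu> \<in> Delta V"
  shows "integrable \<nu> f" and "\<exists>B. \<forall>\<mu>\<in>Delta V. \<bar>\<integral>x. f x \<partial>\<mu>\<bar> \<le> B"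
proof -
  obtain B0 where B0: "\<forall>y\<in>f ` V. norm y \<le> B0"
    using compact_imp_bounded[OF compact_continuous_image[OF assms(2,1)]]
    by (auto simp: bounded_iff)
  then have B: "\<forall>x\<in>V. \<bar>f x\<bar> \<le> B0" by auto
  have I: "integrable \<mu> f" if "\<mu> \<in> Delta V" for \<mu>
  proof -
    interpret prob_space \<mu> using that by (simp add: Delta_def)
    have "f \<in> borel_measurable \<mu>"
    proof -
      have "measurable \<mu> (borel :: real measure) = measurable (restrict_space borel V) borel"
        by (rule measurable_cong_sets[OF D_sets[OF that] refl])
      then show ?thesis using borel_measurable_continuous_on_restrict[OF assms(2)] by simp
    qed
    then show ?thesis
      by (intro integrable_const_bound[where B=B0]) (use B D_space[OF that] in auto)
  qed
  show "integrable \<nu> f" using I assms(3) .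
  have "\<bar>\<integral>x. f x \<partial>\<mu>\<bar> \<le> B0" if "\<mu> \<in> Delta V" for \<mu>
  proof -
    interpret prob_space \<mu> using that by (simp add: Delta_def)
    have "\<bar>\<integral>x. f x \<partial>\<mu>\<bar> \<le> (\<integral>x. \<bar>f x\<bar> \<partial>\<mu>)" by (rule integral_abs_bound)
    also have "\<dots> \<le> (\<integral>x. B0 \<partial>\<mu>)"
      by (intro integral_mono I[OF that] integrable_abs) (use B D_space[OF that] I[OF that] in auto)
    also have "\<dots> = B0" by (simp add: prob_space)
    finally show ?thesis .
  qed
  then show "\<exists>B. \<forall>\<mu>\<in>Delta V. \<bar>\<integral>x. f x \<partial>\<mu>\<bar> \<le> B" by blast
qed


lemma real_ineq:
  fixes m k q d :: real
  assumes "k \<le> m" "d > 0"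
  shows "(if q \<le> m then q - k else 0) \<le> max 0 (min 1 ((m - (q - d)) * (1/d))) * (q - k)"
    and "max 0 (min 1 ((m - (q - d)) * (1/d))) * (q - k) \<le> (if q - d \<le> m then q - d - k else 0) + d"
proof -
  consider "q \<le> m" | "q - d \<le> m" "m < q" | "m < q - d" by linarith
  then show "(if q \<le> m then q - k else 0) \<le> max 0 (min 1 ((m - (q - d)) * (1/d))) * (q - k)"
  proof cases
    case 1
    then have "(m - (q - d)) * (1/d) \<ge> 1" using assms by (simp add: field_simps)
    then show ?thesis using 1 by simp
  next
    case 2
    then show ?thesis using assms by (auto intro!: mult_nonneg_nonneg)
  next
    case 3
    then have "(m - (q - d)) * (1/d) \<le> 0" using assms by (simp add: field_simps)
    then show ?thesis using 3 assms by simp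
  qed
  consider "q \<le> m" | "q - d \<le> m" "m < q" | "m < q - d" by linarith
  then show "max 0 (min 1 ((m - (q - d)) * (1/d))) * (q - k) \<le> (if q - d \<le> m then q - d - k else 0) + d"
  proof cases
    case 1
    then have "(m - (q - d)) * (1/d) \<ge> 1" using assms by (simp add: field_simps)
    then show ?thesis using 1 assms by simp
  next
    case 2
    have "max 0 (min 1 ((m - (q - d)) * (1/d))) \<le> 1" by simp
    moreover have "0 \<le> max 0 (min 1 ((m - (q - d)) * (1/d)))" by simp
    moreover have "q - k \<ge> 0" using 2 assms by simp
    ultimately have "max 0 (min 1 ((m - (q - d)) * (1/d))) * (q - k) \<le> 1 * (q - k)"
      by (intro mult_right_mono) auto
    then show ?thesis using 2 by simp
  next
    case 3
    then have "(m - (q - d)) * (1/d) \<le> 0" using assms by (simp add: field_simps)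
    then show ?thesis using 3 assms by simp
  qed
qed

lemma profit_eq:
  assumes "P \<in> DeltaDelta V"
  shows "profit c q P = (\<integral>\<nu>. indicator {\<nu> \<in> Delta V. q \<le> (\<integral>x. x \<partial>\<nu>)} \<nu> * (q - (\<integral>v. c v \<partial>\<nu>)) \<partial>P)"
  unfolding profit_def set_lebesgue_integral_def DD_space[OF assms] by simp

lemma key:
  fixes V :: "real set" and c :: "real \<Rightarrow> real" and q \<delta> :: real
  assumes V: "compact V" and c: "continuous_on V c" and vc: "\<forall>v\<in>V. v - c v \<ge> 0" and d: "\<delta> > 0"
  defines "g \<equiv> \<lambda>\<nu>. max 0 (min 1 (((\<integral>x. x \<partial>\<nu>) - (q - \<delta>)) * (1/\<delta>))) * (q - (\<integral>x. c x \<partial>\<nu>))"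
  shows "continuous_map (weak_top_Delta V) euclideanreal g"
    and "\<exists>B. \<forall>\<nu>\<in>topspace (weak_top_Delta V). \<bar>g \<nu>\<bar> \<le> B"
    and "\<And>P. P \<in> DeltaDelta V \<Longrightarrow> integrable P g"
    and "\<And>P r. P \<in> DeltaDelta V \<Longrightarrow> integrable P (\<lambda>\<nu>. indicator {\<nu> \<in> Delta V. r \<le> (\<integral>x. x \<partial>\<nu>)} \<nu> * (r - (\<integral>v. c v \<partial>\<nu>)))"
    and "\<And>P. P \<in> DeltaDelta V \<Longrightarrow> profit c q P \<le> (\<integral>\<nu>. g \<nu> \<partial>P)"
    and "\<And>P. P \<in> DeltaDelta V \<Longrightarrow> (\<integral>\<nu>. g \<nu> \<partial>P) \<le> profit c (q - \<delta>) P + \<delta>"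
proof -
  have cid: "continuous_on V (\<lambda>x::real. x)" by (rule continuous_on_id)
  have cm: "continuous_map (weak_top_Delta V) euclideanreal (\<lambda>\<nu>. \<integral>x. x \<partial>\<nu>)"
    using cont_int[OF cid] .
  have ck: "continuous_map (weak_top_Delta V) euclideanreal (\<lambda>\<nu>. \<integral>x. c x \<partial>\<nu>)"
    using cont_int[OF c] .
  show cg: "continuous_map (weak_top_Delta V) euclideanreal g"
    unfolding g_def by (intro continuous_intros cm ck)
  obtain Bk where Bk: "\<forall>\<mu>\<in>Delta V. \<bar>\<integral>x. c x \<partial>\<mu>\<bar> \<le> Bk"
    using D_int(2)[OF V c] Delta_def by blast
  have gb: "\<bar>g \<nu>\<bar> \<le> \<bar>q\<bar> + Bk" if "\<nu> \<in> Delta V" for \<nu>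
  proof -
    let ?l = "max 0 (min 1 (((\<integral>x. x \<partial>\<nu>) - (q - \<delta>)) * (1/\<delta>)))"
    have "\<bar>g \<nu>\<bar> = \<bar>?l\<bar> * \<bar>q - (\<integral>x. c x \<partial>\<nu>)\<bar>" unfolding g_def by (simp add: abs_mult)
    also have "\<dots> \<le> 1 * \<bar>q - (\<integral>x. c x \<partial>\<nu>)\<bar>" by (intro mult_right_mono) auto
    also have "\<dots> \<le> \<bar>q\<bar> + Bk" unfolding mult_1 using Bk[rule_format, OF that] abs_triangle_ineq4[of q "\<integral>x. c x \<partial>\<nu>"] by linarith
    finally show ?thesis .
  qed
  then show "\<exists>B. \<forall>\<nu>\<in>topspace (weak_top_Delta V). \<bar>g \<nu>\<bar> \<le> B"
    unfolding topspace_weak by blast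
  show gi: "integrable P g" if P: "P \<in> DeltaDelta V" for P
  proof -
    interpret prob_space P using P by (simp add: DeltaDelta_def)
    show ?thesis
      by (intro integrable_const_bound[where B="\<bar>q\<bar> + Bk"] DD_meas[OF P cg])
         (use gb DD_space[OF P] in auto)
  qed
  show Fi: "integrable P (\<lambda>\<nu>. indicator {\<nu> \<in> Delta V. r \<le> (\<integral>x. x \<partial>\<nu>)} \<nu> * (r - (\<integral>v. c v \<partial>\<nu>)))"
    if P: "P \<in> DeltaDelta V" for P r
  proof -
    interpret prob_space P using P by (simp add: DeltaDelta_def)
    have [measurable]: "(\<lambda>\<nu>. \<integral>x. x \<partial>\<nu>) \<in> borel_measurable P" using DD_meas[OF P cm] .
    have [measurable]: "(\<lambda>\<nu>. \<integral>x. c x \<partial>\<nu>) \<in> borel_measurable P" using DD_meas[OF P ck] .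
    have eq: "{\<nu> \<in> Delta V. r \<le> (\<integral>x. x \<partial>\<nu>)} = {\<nu> \<in> space P. r \<le> (\<integral>x. x \<partial>\<nu>)}"
      using DD_space[OF P] by simp
    have bd: "\<bar>indicator {\<nu> \<in> Delta V. r \<le> (\<integral>x. x \<partial>\<nu>)} \<nu> * (r - (\<integral>v. c v \<partial>\<nu>))\<bar> \<le> \<bar>r\<bar> + Bk"
      if "\<nu> \<in> space P" for \<nu>
      using Bk that DD_space[OF P] by (auto simp: indicator_def)
    show ?thesis unfolding eq
      by (intro integrable_const_bound[where B="\<bar>r\<bar> + Bk"]) (use bd eq in auto)
  qed
  have km: "(\<integral>x. c x \<partial>\<nu>) \<le> (\<integral>x. x \<partial>\<nu>)" if "\<nu> \<in> Delta V" for \<nu>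
    using vc D_int(1)[OF V c that] D_int(1)[OF V cid that] D_space[OF that]
    by (intro integral_mono) auto
  show "profit c q P \<le> (\<integral>\<nu>. g \<nu> \<partial>P)" if P: "P \<in> DeltaDelta V" for P
    unfolding profit_eq[OF P]
  proof (intro integral_mono Fi gi P)
    fix \<nu> assume "\<nu> \<in> space P"
    then have "\<nu> \<in> Delta V" using DD_space[OF P] by simp
    from real_ineq(1)[OF km[OF this] d, of q] this
    show "indicator {\<nu> \<in> Delta V. q \<le> (\<integral>x. x \<partial>\<nu>)} \<nu> * (q - (\<integral>v. c v \<partial>\<nu>)) \<le> g \<nu>"
      by (auto simp: indicator_def g_def split: if_splits)
  qed
  show "(\<integral>\<nu>. g \<nu> \<partial>P) \<le> profit c (q - \<delta>) P + \<delta>" if P: "P \<in> DeltaDelta V" for P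
  proof -
    interpret prob_space P using P by (simp add: DeltaDelta_def)
    have "(\<integral>\<nu>. g \<nu> \<partial>P) \<le> (\<integral>\<nu>. indicator {\<nu> \<in> Delta V. q - \<delta> \<le> (\<integral>x. x \<partial>\<nu>)} \<nu> * (q - \<delta> - (\<integral>v. c v \<partial>\<nu>)) + \<delta> \<partial>P)"
    proof (intro integral_mono Fi gi P Bochner_Integration.integrable_add integrable_const)
      fix \<nu> assume "\<nu> \<in> space P"
      then have "\<nu> \<in> Delta V" using DD_space[OF P] by simp
      from real_ineq(2)[OF km[OF this] d, of q] this
      show "g \<nu> \<le> indicator {\<nu> \<in> Delta V. q - \<delta> \<le> (\<integral>x. x \<partial>\<nu>)} \<nu> * (q - \<delta> - (\<integral>v. c v \<partial>\<nu>)) + \<delta>"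
        by (auto simp: indicator_def g_def split: if_splits)
    qed
    also have "\<dots> = profit c (q - \<delta>) P + \<delta>"
      unfolding profit_eq[OF P] using Fi[OF P] by (simp add: prob_space)
    finally show ?thesis .
  qed
qed


lemma ereal_aux: "L \<le> ereal (a + d) \<Longrightarrow> L - ereal d \<le> ereal (a::real)"
  by (cases L) auto

theorem lemmaH1:
  fixes V :: "real set" and c :: "real \<Rightarrow> real"
    and P :: "nat \<Rightarrow> real measure measure" and Pstar :: "real measure measure"
    and p \<delta> :: real
  assumes "compact V"
    and "continuous_on V c"
    and "\<forall>v\<in>V. v - c v \<ge> 0"
    and "\<forall>n. P n \<in> DeltaDelta V"
    and "Pstar \<in> DeltaDelta V"
    and "weak_conv_DD V P Pstar"
    and "\<delta> > 0"
  shows "limsup (\<lambda>n. ereal (profit c (p + \<delta>) (P n))) - ereal \<delta> \<le> ereal (profit c p Pstar)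
       \<and> ereal (profit c p Pstar) \<le> liminf (\<lambda>n. ereal (profit c (p - \<delta>) (P n))) + ereal \<delta>"
proof
  note K1 = key(1,2,3,5,6)[OF assms(1,2,3,7), where q="p + \<delta>"]
  note K0 = key(1,2,3,5,6)[OF assms(1,2,3,7), where q=p]
  define g1 where "g1 = (\<lambda>\<nu>. max 0 (min 1 (((\<integral>x. x \<partial>\<nu>) - (p + \<delta> - \<delta>)) * (1/\<delta>))) * (p + \<delta> - (\<integral>x. c x \<partial>\<nu>)))"
  define g0 where "g0 = (\<lambda>\<nu>. max 0 (min 1 (((\<integral>x. x \<partial>\<nu>) - (p - \<delta>)) * (1/\<delta>))) * (p - (\<integral>x. c x \<partial>\<nu>)))"
  have W: "\<forall>f. continuous_map (weak_top_Delta V) euclideanreal f \<and>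
          (\<exists>B. \<forall>\<nu>\<in>topspace (weak_top_Delta V). \<bar>f \<nu>\<bar> \<le> B) \<longrightarrow>
          (\<lambda>n. \<integral>\<nu>. f \<nu> \<partial>(P n)) \<longlonglongrightarrow> (\<integral>\<nu>. f \<nu> \<partial>Pstar)"
    using assms(6) unfolding weak_conv_DD_def by simp
  have conv1: "(\<lambda>n. \<integral>\<nu>. g1 \<nu> \<partial>(P n)) \<longlonglongrightarrow> (\<integral>\<nu>. g1 \<nu> \<partial>Pstar)"
    unfolding g1_def by (rule W[rule_format, OF conjI[OF K1(1) K1(2)]])
  have conv0: "(\<lambda>n. \<integral>\<nu>. g0 \<nu> \<partial>(P n)) \<longlonglongrightarrow> (\<integral>\<nu>. g0 \<nu> \<partial>Pstar)"
    unfolding g0_def by (rule W[rule_format, OF conjI[OF K0(1) K0(2)]])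
  have "limsup (\<lambda>n. ereal (profit c (p + \<delta>) (P n))) \<le> limsup (\<lambda>n. ereal (\<integral>\<nu>. g1 \<nu> \<partial>(P n)))"
  proof (intro Limsup_mono always_eventually allI)
    fix n show "ereal (profit c (p + \<delta>) (P n)) \<le> ereal (\<integral>\<nu>. g1 \<nu> \<partial>(P n))"
      using K1(4)[OF assms(4)[rule_format]] unfolding g1_def by simp
  qed
  also have "\<dots> = ereal (\<integral>\<nu>. g1 \<nu> \<partial>Pstar)"
    by (intro lim_imp_Limsup) (use conv1 in auto)
  also have "\<dots> \<le> ereal (profit c p Pstar + \<delta>)"
    using K1(5)[OF assms(5)] unfolding g1_def by simp
  finally show "limsup (\<lambda>n. ereal (profit c (p + \<delta>) (P n))) - ereal \<delta> \<le> ereal (profit c p Pstar)"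
    by (rule ereal_aux)
  have "ereal (profit c p Pstar) \<le> ereal (\<integral>\<nu>. g0 \<nu> \<partial>Pstar)"
    using K0(4)[OF assms(5)] unfolding g0_def by simp
  also have "\<dots> = liminf (\<lambda>n. ereal (\<integral>\<nu>. g0 \<nu> \<partial>(P n)))"
    by (intro lim_imp_Liminf[symmetric]) (use conv0 in auto)
  also have "\<dots> \<le> liminf (\<lambda>n. ereal (profit c (p - \<delta>) (P n)) + ereal \<delta>)"
  proof (intro Liminf_mono always_eventually allI)
    fix n show "ereal (\<integral>\<nu>. g0 \<nu> \<partial>(P n)) \<le> ereal (profit c (p - \<delta>) (P n)) + ereal \<delta>"
      using K0(5)[OF assms(4)[rule_format]] unfolding g0_def by simp
  qed
  also have "\<dots> = liminf (\<lambda>n. ereal (profit c (p - \<delta>) (P n))) + ereal \<delta>"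
    by (rule Liminf_add_ereal_right) auto
  finally show "ereal (profit c p Pstar) \<le> liminf (\<lambda>n. ereal (profit c (p - \<delta>) (P n))) + ereal \<delta>" .
qed

end
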